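(* Let $\Delta\subset\mathbb{R}^n$ be an $n$-dimensional integral polytope containing the origin and having a unique codimension-1 face $\delta$ not containing the origin, with $\Delta$ the convex hull of $\delta$ and the origin. Let $A=\{V_1,\dots,V_J\}\subset\delta\cap\mathbb{Z}^n$ contain all vertices of $\delta$, let $T=\{\delta_1,\dots,\delta_h\}$ be a regular decomposition of $(\delta,A)$ with associated concave function $\phi$, and let $f=\sum_{j=1}^J a_jx^{V_j}$ with the $a_j$ regarded as indeterminates. If $r\in\Sigma_i$ for some $1\le i\le h$ (and $r$ is a lattice point), then $d(\phi,F_r(f)-F_r(f_{\Sigma_i}))<m(\phi,A;r)$.
   Context: $C(\Delta)$ is the closed cone generated by $\Delta$ and the origin; $w(r)$ is the least $c\ge0$ with $r\in c\Delta$. A regular decomposition of $(\delta,A)$ is a collection of polytopes $\delta_1,\dots,\delta_h$ with vertices in $A$, of full dimension in $\delta$, whose union is $\delta$ and whose pairwise intersections have lower dimension, with a piecewise linear concave $\phi:\delta\to\mathbb{R}$ whose domains of linearity are exactly the $\delta_i$; $\phi$ is extended to $C(\Delta)\setminus\{0\}$ by $\phi(r)=w(r)\phi(r/w(r))$. $\Sigma_i$ is the closed cone generated by $\delta_i$ and the origin, and $f_{\Sigma_i}=\sum_{V_j\in\Sigma_i}a_jx^{V_j}$. $m(\phi,A;r)=\sup\{\sum_j u_j\phi(V_j):\sum_ju_jV_j=r,\ u_j\ge0\}$. Let $\pi$ satisfy $\sum_{m\ge0}\pi^{p^m}/p^m=0$, $\mathrm{ord}_p\pi=1/(p-1)$,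 and let $E(t)=\exp(\sum_{m\ge0}t^{p^m}/p^m)=\sum_m\lambda_mt^m$ be the Artin–Hasse exponential. For $r\in\mathbb{Z}^n$, $F_r(f)=\sum_u\big(\prod_{j=1}^J\lambda_{u_j}a_j^{u_j}\big)\pi^{u_1+\dots+u_J}$, summed over all integral $u=(u_1,\dots,u_J)$ with $u_j\ge0$ and $\sum_ju_jV_j=r$ (and similarly $F_r(f_{\Sigma_i})$ using only the $V_j\in\Sigma_i$). For a polynomial $F=\sum_u\lambda_u\prod_ja_j^{u_j}$, its $\phi$-degree is $d(\phi,F)=\max\{\sum_ju_j\phi(V_j):\lambda_u\neq0\}$, with $d(\phi,0)=-\infty$. *)

theory Defs
  imports "HOL-Analysis.Analysis" "HOL-Computational_Algebra.Formal_Power_Series"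
begin

definition lattice_pt :: "real^'n \<Rightarrow> bool" where
  "lattice_pt x \<longleftrightarrow> (\<forall>i. x $ i \<in> \<int>)"

definition integral_polytope :: "(real^'n) set \<Rightarrow> bool" where
  "integral_polytope P \<longleftrightarrow> (\<exists>S. finite S \<and> (\<forall>x\<in>S. lattice_pt x) \<and> P = convex hull S)"

text \<open>phi is affine (linear in the sense of the paper) on S.\<close>
definition affine_on :: "(real^'n) set \<Rightarrow> (real^'n \<Rightarrow> real) \<Rightarrow> bool" where
  "affine_on S phi \<longleftrightarrow> (\<exists>c b. \<forall>x\<in>S. phi x = c \<bullet> x + b)"

definition regular_decomposition ::
  "(real^'n) set \<Rightarrow> (real^'n) set \<Rightarrow> nat \<Rightarrow> (nat \<Rightarrow> (real^'n) set) \<Rightarrow> (real^'n \<Rightarrow> real) \<Rightarrow> bool" where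
  "regular_decomposition \<delta> A h T phi \<longleftrightarrow>
     (\<forall>i\<in>{1..h}. polytope (T i) \<and> {v. v extreme_point_of (T i)} \<subseteq> A
                 \<and> aff_dim (T i) = aff_dim \<delta>) \<and>
     (\<Union>i\<in>{1..h}. T i) = \<delta> \<and>
     (\<forall>i\<in>{1..h}. \<forall>k\<in>{1..h}. i \<noteq> k \<longrightarrow> aff_dim (T i \<inter> T k) < aff_dim \<delta>) \<and>
     concave_on \<delta> phi \<and>
     (\<forall>i\<in>{1..h}. affine_on (T i) phi) \<and>
     (\<forall>i\<in>{1..h}. \<forall>S. convex S \<and> T i \<subseteq> S \<and> S \<subseteq> \<delta> \<and> affine_on S phi \<longrightarrow> S = T i)"

definition closed_cone_gen :: "(real^'n) set \<Rightarrow> (real^'n) set" where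
  "closed_cone_gen S = closure (convex_cone hull (insert 0 S))"

definition artin_hasse :: "nat \<Rightarrow> rat fps" where
  "artin_hasse p = fps_exp 1 oo Abs_fps (\<lambda>n. if (\<exists>m. n = p ^ m) then 1 / of_nat n else 0)"

definition AH_coeff :: "nat \<Rightarrow> nat \<Rightarrow> rat" where
  "AH_coeff p m = fps_nth (artin_hasse p) m"

text \<open>Polynomials in the indeterminates a_1..a_J are represented by their coefficient
  functions on exponent vectors u :: nat \<Rightarrow> nat (with u j = 0 for j outside {1..J}).
  F_r restricted to the V_j lying in a set C (C = UNIV gives F_r(f), C = Sigma_i gives F_r(f_Sigma_i)).\<close>
definition F_coeff :: "nat \<Rightarrow> 'k::field_char_0 \<Rightarrow> nat \<Rightarrow> (nat \<Rightarrow> real^'n) \<Rightarrow> (real^'n) set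
     \<Rightarrow> real^'n \<Rightarrow> (nat \<Rightarrow> nat) \<Rightarrow> 'k" where
  "F_coeff p \<pi> J V C r u =
     (if (\<forall>j. j \<notin> {1..J} \<longrightarrow> u j = 0) \<and> (\<forall>j\<in>{1..J}. V j \<notin> C \<longrightarrow> u j = 0)
         \<and> (\<Sum>j=1..J. of_nat (u j) *\<^sub>R V j) = r
      then (\<Prod>j=1..J. of_rat (AH_coeff p (u j))) * \<pi> ^ (\<Sum>j=1..J. u j)
      else 0)"

text \<open>phi-degree of a polynomial given by its coefficient function (-\<infinity> for the zero polynomial).\<close>
definition phi_degree :: "(real^'n \<Rightarrow> real) \<Rightarrow> nat \<Rightarrow> (nat \<Rightarrow> real^'n) \<Rightarrow> ((nat \<Rightarrow> nat) \<Rightarrow> 'k::zero) \<Rightarrow> ereal" where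
  "phi_degree phi J V F = Sup ((\<lambda>u. ereal (\<Sum>j=1..J. real (u j) * phi (V j))) ` {u. F u \<noteq> 0})"

definition m_phi :: "(real^'n \<Rightarrow> real) \<Rightarrow> nat \<Rightarrow> (nat \<Rightarrow> real^'n) \<Rightarrow> real^'n \<Rightarrow> ereal" where
  "m_phi phi J V r = Sup ((\<lambda>u. ereal (\<Sum>j=1..J. u j * phi (V j))) `
       {u :: nat \<Rightarrow> real. (\<forall>j\<in>{1..J}. u j \<ge> 0) \<and> (\<Sum>j=1..J. u j *\<^sub>R V j) = r})"

end

theory Submission
  imports Defs
begin

lemma tangent_le:
  fixes \<delta> T :: "(real^'n) set" and phi :: "real^'n \<Rightarrow> real"
  assumes cd: "convex \<delta>" and cT: "convex T" and Tsub: "T \<subseteq> \<delta>" and Tne: "T \<noteq> {}"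
    and ah: "affine hull T = affine hull \<delta>"
    and conc: "concave_on \<delta> phi" and lin: "\<forall>x\<in>T. phi x = c \<bullet> x + b"
    and x: "x \<in> \<delta>"
  shows "phi x \<le> c \<bullet> x + b"
proof -
  obtain q where q: "q \<in> rel_interior T" using rel_interior_eq_empty[OF cT] Tne by auto
  then obtain e where e: "e > 0" "ball q e \<inter> affine hull T \<subseteq> T" and qT: "q \<in> T"
    using mem_rel_interior_ball by blast
  show ?thesis
  proof (cases "x = q")
    case True then show ?thesis using lin qT by auto
  next
    case False
    define d where "d = norm (x - q)"
    have d: "d > 0" using False d_def by auto
    define s where "s = min (1/2) (e / (2*d))"
    have s: "s > 0" "s \<le> 1" using e d by (auto simp: s_def)
    define y where "y = (1 - s) *\<^sub>R q + s *\<^sub>R x"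
    have yd: "y \<in> \<delta>" proof -
      have "q \<in> \<delta>" using Tsub qT by blast
      then show ?thesis using cd x s unfolding convex_alt y_def by simp
    qed
    have "y - q = s *\<^sub>R (x - q)" by (simp add: y_def algebra_simps)
    then have "dist q y = s * d" using s by (metis d_def dist_commute dist_norm norm_scaleR abs_of_pos)
    also have "\<dots> \<le> e/(2*d) * d" using d s by (intro mult_right_mono) (auto simp: s_def)
    also have "\<dots> < e" using d e by simp
    finally have "y \<in> ball q e" by simp
    moreover have "y \<in> affine hull T" using ah yd by (simp add: hull_inc)
    ultimately have yT: "y \<in> T" using e(2) by (meson IntI subsetD)
    have "phi y \<ge> (1 - s) * phi q + s * phi x"
      using concave_onD[OF conc, of s q x] s Tsub qT x by (auto simp: y_def)
    moreover have "phi y = (1 - s) * (c \<bullet> q + b) + s * (c \<bullet> x + b)"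
      using lin yT by (simp add: y_def inner_add_right algebra_simps)
    moreover have "phi q = c \<bullet> q + b" using lin qT by auto
    ultimately have "(1 - s) * (c \<bullet> q + b) + s * phi x \<le> (1 - s) * (c \<bullet> q + b) + s * (c \<bullet> x + b)"
      by (metis)
    then have "s * phi x \<le> s * (c \<bullet> x + b)" by linarith
    then show ?thesis using s(1) mult_le_cancel_left_pos by blast
  qed
qed

lemma extend_in:
  fixes \<delta> T :: "(real^'n) set" and phi :: "real^'n \<Rightarrow> real"
  assumes cd: "convex \<delta>" and cT: "convex T" and Tsub: "T \<subseteq> \<delta>" and Tne: "T \<noteq> {}"
    and ah: "affine hull T = affine hull \<delta>"
    and conc: "concave_on \<delta> phi" and lin: "\<forall>x\<in>T. phi x = c \<bullet> x + b"
    and maxi: "\<forall>S. convex S \<and> T \<subseteq> S \<and> S \<subseteq> \<delta> \<and> affine_on S phi \<longrightarrow> S = T"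
    and v: "v \<in> \<delta>" and eq: "phi v = c \<bullet> v + b"
  shows "v \<in> T"
proof -
  define S where "S = convex hull (insert v T)"
  have Sd: "S \<subseteq> \<delta>" unfolding S_def using cd v Tsub by (simp add: hull_minimal)
  have "affine_on S phi" unfolding affine_on_def
  proof (intro exI ballI)
    fix y assume "y \<in> S"
    then obtain u w z where uw: "u \<ge> 0" "w \<ge> 0" "u + w = 1" and z: "z \<in> T"
      and y: "y = u *\<^sub>R v + w *\<^sub>R z"
      unfolding S_def convex_hull_insert[OF Tne] convex_hull_eq[THEN iffD2, OF cT] by blast
    have zd: "z \<in> \<delta>" using z Tsub by blast
    have u: "u = 1 - w" using uw by simp
    have "phi y \<ge> (1 - w) * phi v + w * phi z"
      using concave_onD[OF conc, of w v z] uw v zd by (simp add: y u)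
    also have "(1 - w) * phi v + w * phi z = c \<bullet> y + b"
      using eq lin z by (simp add: y u inner_add_right algebra_simps)
    finally have "phi y \<ge> c \<bullet> y + b" .
    moreover have "y \<in> \<delta>" using \<open>y \<in> S\<close> Sd by blast
    then have "phi y \<le> c \<bullet> y + b" using tangent_le[OF cd cT Tsub Tne ah conc lin] by blast
    ultimately show "phi y = c \<bullet> y + b" by simp
  qed
  moreover have "convex S" "T \<subseteq> S" unfolding S_def by (auto intro: hull_subset[THEN subsetD])
  ultimately have "S = T" using maxi Sd by blast
  moreover have "v \<in> S" unfolding S_def by (simp add: hull_inc)
  ultimately show ?thesis by simp
qed

lemma Sup_finite_less:
  fixes A :: "ereal set"
  assumes "finite A" "\<forall>x\<in>A. x < ereal c"
  shows "Sup A < ereal c"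
  using assms by (induction A rule: finite_induct) (auto simp: bot_ereal_def)

theorem mainTheorem4:
  fixes \<Delta> \<delta> :: "(real^'n) set"
    and V :: "nat \<Rightarrow> real^'n" and J h i :: nat
    and T :: "nat \<Rightarrow> (real^'n) set" and phi :: "real^'n \<Rightarrow> real"
    and p :: nat and \<pi> :: "'k::field_char_0"
    and r :: "real^'n"
  assumes "integral_polytope \<Delta>"
    and "aff_dim \<Delta> = int CARD('n)"
    and "0 \<in> \<Delta>"
    and "\<delta> face_of \<Delta>" and "aff_dim \<delta> = int CARD('n) - 1" and "0 \<notin> \<delta>"
    and "\<forall>F. F face_of \<Delta> \<and> aff_dim F = int CARD('n) - 1 \<and> 0 \<notin> F \<longrightarrow> F = \<delta>"
    and "\<Delta> = convex hull (insert 0 \<delta>)"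
    and "inj_on V {1..J}"
    and "\<forall>j\<in>{1..J}. V j \<in> \<delta> \<and> lattice_pt (V j)"
    and "{v. v extreme_point_of \<delta>} \<subseteq> V ` {1..J}"
    and "regular_decomposition \<delta> (V ` {1..J}) h T phi"
    and "prime p" and "\<pi> \<noteq> 0"
    and "i \<in> {1..h}" and "r \<in> closed_cone_gen (T i)" and "lattice_pt r"
  shows "phi_degree phi J V
           (\<lambda>u. F_coeff p \<pi> J V UNIV r u - F_coeff p \<pi> J V (closed_cone_gen (T i)) r u)
         < m_phi phi J V r"
proof -
  note rd = assms(12)[unfolded regular_decomposition_def]
  note rd1 = rd[THEN conjunct1]
  note rd2 = rd[THEN conjunct2, THEN conjunct1]
  note rd4 = rd[THEN conjunct2, THEN conjunct2, THEN conjunct2, THEN conjunct1]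
  note rd5 = rd[THEN conjunct2, THEN conjunct2, THEN conjunct2, THEN conjunct2, THEN conjunct1]
  note rd6 = rd[THEN conjunct2, THEN conjunct2, THEN conjunct2, THEN conjunct2, THEN conjunct2]
  have i: "i \<in> {1..h}" by fact
  have polyT: "polytope (T i)" and extT: "{v. v extreme_point_of (T i)} \<subseteq> V ` {1..J}"
    and adT: "aff_dim (T i) = aff_dim \<delta>" using rd1[rule_format, OF i] by auto
  have Tsub: "T i \<subseteq> \<delta>" using rd2 i by blast
  have conc: "concave_on \<delta> phi" by (rule rd4)
  obtain c b where lin: "\<forall>x\<in>T i. phi x = c \<bullet> x + b"
    using rd5[rule_format, OF i] unfolding affine_on_def by blast
  have maxi: "\<forall>S. convex S \<and> T i \<subseteq> S \<and> S \<subseteq> \<delta> \<and> affine_on S phi \<longrightarrow> S = T i"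
    using rd6[rule_format, OF i] by blast
  have cd: "convex \<delta>" using assms(4) face_of_imp_convex by blast
  have cT: "convex (T i)" and compT: "compact (T i)"
    using polyT polytope_imp_convex polytope_imp_compact by auto
  have card1: "CARD('n) \<ge> 1" by (simp add: Suc_leI)
  then have "aff_dim (T i) \<noteq> -1" using adT assms(5) by simp
  then have Tne: "T i \<noteq> {}" by (metis aff_dim_empty)
  have ah: "affine hull (T i) = affine hull \<delta>"
    by (rule affine_dim_equal) (use Tne adT Tsub in \<open>auto simp: hull_mono\<close>)
  have "aff_dim \<delta> = int (DIM(real^'n) - 1)" using assms(5) card1 by simp
  then obtain a \<beta> where a: "a \<noteq> 0" and ahd: "affine hull \<delta> = {x. a \<bullet> x = \<beta>}"
    using aff_dim_eq_hyperplane[of \<delta>] by blast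
  have "\<beta> \<noteq> 0"
  proof
    assume "\<beta> = 0"
    then have "0 \<in> affine hull \<delta>" using ahd by simp
    moreover have "convex \<Delta>" using assms(8) convex_convex_hull by metis
    then have "\<delta> = affine hull \<delta> \<inter> \<Delta>"
      by (rule face_of_imp_eq_affine_Int[OF _ assms(4)])
    then have "affine hull \<delta> \<inter> \<Delta> \<subseteq> \<delta>" by (rule equalityD2)
    ultimately have "0 \<in> \<delta>" using assms(3) by blast
    then show False using assms(6) by contradiction
  qed
  define l where "l = a /\<^sub>R \<beta>"
  have l1: "l \<bullet> x = 1" if "x \<in> \<delta>" for x
  proof -
    have "x \<in> affine hull \<delta>" by (rule hull_inc[OF that])
    then have "a \<bullet> x = \<beta>" using ahd by blast
    moreover have "l \<bullet> x = (a \<bullet> x) / \<beta>" by (simp add: l_def divide_inverse_commute)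
    ultimately show ?thesis using \<open>\<beta> \<noteq> 0\<close> by simp
  qed
  define k where "k = c + b *\<^sub>R l"
  have kd: "k \<bullet> x = c \<bullet> x + b" if "x \<in> \<delta>" for x
    using l1[OF that] by (simp add: k_def inner_add_left)
  have Vd: "\<forall>j\<in>{1..J}. V j \<in> \<delta>" using assms(10) by blast
  have K1: "phi (V j) \<le> k \<bullet> V j" if "j \<in> {1..J}" for j
  proof -
    have "V j \<in> \<delta>" using Vd that by blast
    then show ?thesis using tangent_le[OF cd cT Tsub Tne ah conc lin, of "V j"] kd[of "V j"] by simp
  qed
  have TC: "T i \<subseteq> closed_cone_gen (T i)"
    unfolding closed_cone_gen_def
    using hull_subset[of "insert 0 (T i)" convex_cone] closure_subset[of "convex_cone hull (insert 0 (T i))"]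
    by blast
  have K2: "phi (V j) < k \<bullet> V j" if "j \<in> {1..J}" "V j \<notin> closed_cone_gen (T i)" for j
  proof -
    have "V j \<notin> T i" using that TC by blast
    then have "phi (V j) \<noteq> c \<bullet> V j + b"
      using extend_in[OF cd cT Tsub Tne ah conc lin maxi] Vd that by blast
    then show ?thesis using K1[OF that(1)] kd Vd that by force
  qed
  have "closed_cone_gen (T i) = conic hull (T i)"
  proof -
    have "convex_cone hull (insert 0 (T i)) = convex_cone hull (T i)"
      by (simp add: convex_cone_hull_contains_0 hull_redundant)
    also have "\<dots> = conic hull (T i)"
      using convex_cone_hull_separate_nonempty[OF Tne] convex_hull_eq[THEN iffD2, OF cT] by simp
    finally show ?thesis unfolding closed_cone_gen_def
      using closed_conic_hull[of "T i"] compT Tsub assms(6) closure_closed by auto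
  qed
  then obtain lam q where lam: "lam \<ge> 0" and q: "q \<in> T i" and r: "r = lam *\<^sub>R q"
    using assms(16) unfolding conic_hull_explicit by blast
  define E where "E = {v. v extreme_point_of (T i)}"
  have finE: "finite E" using extT finite_subset E_def by blast
  have ET: "E \<subseteq> T i" unfolding E_def using extreme_point_of_def by blast
  have "T i = convex hull E" unfolding E_def using Krein_Milman_Minkowski compT cT by blast
  then obtain w where w: "\<forall>x\<in>E. 0 \<le> w x" "sum w E = 1" "(\<Sum>x\<in>E. w x *\<^sub>R x) = q"
    using q convex_hull_finite[OF finE] by auto
  define us where "us j = (if V j \<in> E then lam * w (V j) else 0)" for j
  have EV: "E \<subseteq> V ` {1..J}" using extT E_def by simp
  have reidx: "(\<Sum>j=1..J. g (V j)) = (\<Sum>y\<in>E. g y)" if "\<forall>y. y \<notin> E \<longrightarrow> g y = 0"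
    for g :: "real^'n \<Rightarrow> 'b::comm_monoid_add"
  proof -
    have "(\<Sum>j=1..J. g (V j)) = (\<Sum>y\<in>V ` {1..J}. g y)"
      using sum.reindex[OF assms(9), of g] by simp
    also have "\<dots> = (\<Sum>y\<in>E. g y)"
      by (rule sum.mono_neutral_right) (use EV that in auto)
    finally show ?thesis .
  qed
  have sumr: "(\<Sum>y\<in>E. (lam * w y) *\<^sub>R y) = r"
  proof -
    have "(\<Sum>y\<in>E. (lam * w y) *\<^sub>R y) = lam *\<^sub>R (\<Sum>y\<in>E. w y *\<^sub>R y)"
      by (simp add: scaleR_sum_right)
    then show ?thesis using w(3) r by simp
  qed
  have us_r: "(\<Sum>j=1..J. us j *\<^sub>R V j) = r"
  proof -
    have "(\<Sum>j=1..J. us j *\<^sub>R V j) = (\<Sum>y\<in>E. (lam * w y) *\<^sub>R y)"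
      using reidx[of "\<lambda>y. (if y \<in> E then lam * w y else 0) *\<^sub>R y"]
      by (simp add: us_def cong: sum.cong)
    also have "\<dots> = r" by (rule sumr)
    finally show ?thesis .
  qed
  have us_v: "(\<Sum>j=1..J. us j * phi (V j)) = k \<bullet> r"
  proof -
    have "(\<Sum>j=1..J. us j * phi (V j)) = (\<Sum>y\<in>E. (lam * w y) * phi y)"
      using reidx[of "\<lambda>y. (if y \<in> E then lam * w y else 0) * phi y"]
      by (simp add: us_def cong: sum.cong)
    also have "\<dots> = (\<Sum>y\<in>E. (lam * w y) * (k \<bullet> y))"
    proof (intro sum.cong refl)
      fix y assume "y \<in> E"
      then have "y \<in> T i" "y \<in> \<delta>" using ET Tsub by auto
      then show "lam * w y * phi y = lam * w y * (k \<bullet> y)" using lin kd by simp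
    qed
    also have "\<dots> = k \<bullet> (\<Sum>y\<in>E. (lam * w y) *\<^sub>R y)"
      by (simp add: inner_sum_right)
    also have "\<dots> = k \<bullet> r" by (simp only: sumr)
    finally show ?thesis .
  qed
  have us_nn: "\<forall>j\<in>{1..J}. us j \<ge> 0" using lam w by (auto simp: us_def)
  have M: "ereal (k \<bullet> r) \<le> m_phi phi J V r"
    unfolding m_phi_def
    by (rule Sup_upper) (use us_r us_v us_nn in \<open>force\<close>)
  define C where "C = closed_cone_gen (T i)"
  define Su where "Su = {u. (\<lambda>u. F_coeff p \<pi> J V UNIV r u - F_coeff p \<pi> J V C r u) u \<noteq> 0}"
  have supp: "(\<forall>j. j \<notin> {1..J} \<longrightarrow> u j = 0) \<and> (\<Sum>j=1..J. of_nat (u j) *\<^sub>R V j) = r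
      \<and> (\<exists>j\<in>{1..J}. V j \<notin> C \<and> u j \<noteq> 0)" if "u \<in> Su" for u
    using that unfolding Su_def F_coeff_def by (auto split: if_splits)
  define N where "N = nat \<lceil>l \<bullet> r\<rceil>"
  have "Su \<subseteq> {u. \<forall>x. (x \<in> {1..J} \<longrightarrow> u x \<in> {0..N}) \<and> (x \<notin> {1..J} \<longrightarrow> u x = 0)}"
  proof (intro subsetI CollectI allI conjI impI)
    fix u x assume u: "u \<in> Su"
    then show "x \<notin> {1..J} \<Longrightarrow> u x = 0" using supp by blast
    assume x: "x \<in> {1..J}"
    have "l \<bullet> r = (\<Sum>j=1..J. real (u j) * (l \<bullet> V j))"
      using supp[OF u] by (metis (no_types, lifting) inner_scaleR_right inner_sum_right sum.cong)
    also have "\<dots> = (\<Sum>j=1..J. real (u j))" using l1 Vd by (intro sum.cong) auto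
    also have "\<dots> \<ge> real (u x)"
      using x by (intro member_le_sum) auto
    finally have "real (u x) \<le> l \<bullet> r" .
    then show "u x \<in> {0..N}" unfolding N_def by (simp add: le_nat_iff) linarith
  qed
  then have finSu: "finite Su"
    by (rule finite_subset) (rule finite_set_of_finite_funs, auto)
  have vals: "ereal (\<Sum>j=1..J. real (u j) * phi (V j)) < ereal (k \<bullet> r)" if uS: "u \<in> Su" for u
  proof -
    obtain j0 where j0: "j0 \<in> {1..J}" "V j0 \<notin> C" "u j0 \<noteq> 0" using supp[OF uS] by blast
    have "(\<Sum>j=1..J. real (u j) * phi (V j)) < (\<Sum>j=1..J. real (u j) * (k \<bullet> V j))"
    proof (rule sum_strict_mono_ex1)
      show "\<forall>x\<in>{1..J}. real (u x) * phi (V x) \<le> real (u x) * (k \<bullet> V x)"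
        using K1 by (simp add: mult_left_mono)
      show "\<exists>a\<in>{1..J}. real (u a) * phi (V a) < real (u a) * (k \<bullet> V a)"
        using j0 K2[of j0] C_def by (intro bexI[of _ j0]) auto
    qed simp
    also have "\<dots> = k \<bullet> r"
      using supp[OF uS] by (metis (no_types, lifting) inner_scaleR_right inner_sum_right sum.cong)
    finally show ?thesis by simp
  qed
  have "phi_degree phi J V (\<lambda>u. F_coeff p \<pi> J V UNIV r u - F_coeff p \<pi> J V C r u) < ereal (k \<bullet> r)"
    unfolding phi_degree_def Su_def[symmetric]
    by (rule Sup_finite_less) (use finSu vals in auto)
  then show ?thesis using M C_def by simp
qed

end
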